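(* Let $K\ge1$, let $g_1,\dots,g_K$ be positive integers, let $w\in\mathbb{C}$ and $y_{i,\ell}\in\mathbb{C}$ ($1\le i\le K$, $1\le\ell\le g_i$). Treat $x$ and $\overline{x}$ as two independent variables, and for a rational function $R(x,\overline{x})$ let $\overline{R}$ denote the function obtained by conjugating all coefficients and interchanging the roles of $x$ and $\overline{x}$. Define recursively $$Q_1=-\sum_{\ell=1}^{g_1}\frac{1}{\overline{x}-\overline{y_{1,\ell}}},\qquad Q_j=-\sum_{\ell=1}^{g_j}\frac{1}{\overline{x}-\overline{y_{j,\ell}}+\sum_{i=1}^{j-1}\overline{Q_i}}\quad(2\le j\le K),$$ $$D_1=\prod_{\ell=1}^{g_1}(\overline{x}-\overline{y_{1,\ell}}),\qquad D_j=\prod_{\ell=1}^{g_j}\Big(\overline{x}-\overline{y_{j,\ell}}+\sum_{i=1}^{j-1}\overline{Q_i}\Big)\cdot\Big(\prod_{k=1}^{j-1}\overline{D_k}\Big)^{g_j}\quad(2\le j\le K),$$ (each $D_j$ is a polynomial in $x,\overline{x}$), and set $$P=\Big(x-w+\sum_{k=1}^K Q_k\Big)\prod_{i=1}^K D_i,\qquad \hat P=(x-w)\prod_{i=1}^K D_i .$$ Let $F(Z)=\prod_{i=1}^K(1+g_iZ)$, $E_K=\frac{F(1)+F(-1)}{2}$ and $O_K=\frac{F(1)-F(-1)}{2}$. Then (a) $\deg(P)=\deg(\hat P)$; (b) $\deg(P)=(E_K,O_K)$.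
   Context: For a polynomial $\rho$ in two variables $x,\overline{x}$, the degree vector is $\deg(\rho)=(\deg_x\rho,\deg_{\overline{x}}\rho)$, where $\deg_x\rho$ is the highest exponent of $x$ appearing in $\rho$ and $\deg_{\overline{x}}\rho$ the highest exponent of $\overline{x}$. The polynomial $P$ is the "lensing polynomial" obtained by clearing denominators in the multiplane point-mass lensing equation, with all masses and inter-plane scaling constants set equal to $1$. *)

theory Defs
  imports Complex_Main "HOL-Computational_Algebra.Polynomial" "HOL-Computational_Algebra.Fraction_Field"
begin

text \<open>Bivariate polynomials in x and xbar: type complex poly poly.
  The outer variable is x, the inner (coefficient) variable is xbar:
  p = sum_i (coeff p i)(xbar) * x^i.\<close>

type_synonym bipoly = "complex poly poly"
type_synonym birat = "bipoly fract"

definition degx :: "bipoly \<Rightarrow> nat" where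
  "degx p = degree p"

definition degxbar :: "bipoly \<Rightarrow> nat" where
  "degxbar p = Max ((\<lambda>i. degree (coeff p i)) ` {..degree p})"

definition degvec :: "bipoly \<Rightarrow> nat \<times> nat" where
  "degvec p = (degx p, degxbar p)"

text \<open>Bar operation on polynomials: conjugate coefficients and swap x and xbar.\<close>
definition barpoly :: "bipoly \<Rightarrow> bipoly" where
  "barpoly p = (\<Sum>i\<le>degree p. \<Sum>j\<le>degree (coeff p i).
      monom (monom (cnj (coeff (coeff p i) j)) i) j)"

definition barrat :: "birat \<Rightarrow> birat" where
  "barrat r = (let (a, b) = (SOME (a, b). b \<noteq> 0 \<and> r = Fract a b)
               in Fract (barpoly a) (barpoly b))"

definition polyF :: "bipoly \<Rightarrow> birat" where
  "polyF p = Fract p 1"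

definition varX :: birat where "varX = polyF [:0, 1:]"
definition varXbar :: birat where "varXbar = polyF [:[:0, 1:]:]"
definition constF :: "complex \<Rightarrow> birat" where "constF c = polyF [:[:c:]:]"

text \<open>Indices are 0-based: lenses i = 0..K-1, and l = 0..g i - 1.
  QS g y n = sum_{i<n} bar(Q_i).\<close>

definition Qterm :: "(nat \<Rightarrow> nat) \<Rightarrow> (nat \<Rightarrow> nat \<Rightarrow> complex) \<Rightarrow> nat \<Rightarrow> birat \<Rightarrow> birat" where
  "Qterm g y j S = - (\<Sum>l<g j. 1 / (varXbar - constF (cnj (y j l)) + S))"

fun QS :: "(nat \<Rightarrow> nat) \<Rightarrow> (nat \<Rightarrow> nat \<Rightarrow> complex) \<Rightarrow> nat \<Rightarrow> birat" where
  "QS g y 0 = 0"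
| "QS g y (Suc n) = QS g y n + barrat (Qterm g y n (QS g y n))"

definition Q :: "(nat \<Rightarrow> nat) \<Rightarrow> (nat \<Rightarrow> nat \<Rightarrow> complex) \<Rightarrow> nat \<Rightarrow> birat" where
  "Q g y j = Qterm g y j (QS g y j)"

text \<open>DS g y n = prod_{k<n} bar(D_k).\<close>
fun DS :: "(nat \<Rightarrow> nat) \<Rightarrow> (nat \<Rightarrow> nat \<Rightarrow> complex) \<Rightarrow> nat \<Rightarrow> birat" where
  "DS g y 0 = 1"
| "DS g y (Suc n) = DS g y n *
     barrat ((\<Prod>l<g n. varXbar - constF (cnj (y n l)) + QS g y n) * DS g y n ^ g n)"

definition D :: "(nat \<Rightarrow> nat) \<Rightarrow> (nat \<Rightarrow> nat \<Rightarrow> complex) \<Rightarrow> nat \<Rightarrow> birat" where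
  "D g y j = (\<Prod>l<g j. varXbar - constF (cnj (y j l)) + QS g y j) * DS g y j ^ g j"

definition lensP :: "nat \<Rightarrow> (nat \<Rightarrow> nat) \<Rightarrow> (nat \<Rightarrow> nat \<Rightarrow> complex) \<Rightarrow> complex \<Rightarrow> birat" where
  "lensP K g y w = (varX - constF w + (\<Sum>k<K. Q g y k)) * (\<Prod>i<K. D g y i)"

definition lensPhat :: "nat \<Rightarrow> (nat \<Rightarrow> nat) \<Rightarrow> (nat \<Rightarrow> nat \<Rightarrow> complex) \<Rightarrow> complex \<Rightarrow> birat" where
  "lensPhat K g y w = (varX - constF w) * (\<Prod>i<K. D g y i)"

definition FK :: "nat \<Rightarrow> (nat \<Rightarrow> nat) \<Rightarrow> int \<Rightarrow> int" where
  "FK K g z = (\<Prod>i<K. 1 + int (g i) * z)"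

definition EK :: "nat \<Rightarrow> (nat \<Rightarrow> nat) \<Rightarrow> int" where
  "EK K g = (FK K g 1 + FK K g (-1)) div 2"

definition OK :: "nat \<Rightarrow> (nat \<Rightarrow> nat) \<Rightarrow> int" where
  "OK K g = (FK K g 1 - FK K g (-1)) div 2"

end

theory Submission
  imports Defs
begin


lemma coeff_bar: "coeff (coeff (barpoly p) a) b = cnj (coeff (coeff p b) a)"
proof -
  have "coeff (coeff (barpoly p) a) b = (\<Sum>i\<le>degree p. \<Sum>j\<le>degree (coeff p i).
      (if i = b then (if j = a then cnj (coeff (coeff p i) j) else 0) else 0))"
    unfolding barpoly_def coeff_sum by (intro sum.cong refl) auto
  also have "\<dots> = (\<Sum>i\<le>degree p. (if i = b then (\<Sum>j\<le>degree (coeff p i). (if j = a then cnj (coeff (coeff p i) j) else 0)) else 0))"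
    by (intro sum.cong refl) auto
  also have "\<dots> = (if b \<le> degree p then (\<Sum>j\<le>degree (coeff p b). (if j = a then cnj (coeff (coeff p b) j) else 0)) else 0)"
    by (simp add: sum.delta)
  also have "\<dots> = (if b \<le> degree p then (if a \<le> degree (coeff p b) then cnj (coeff (coeff p b) a) else 0) else 0)"
    by (simp add: sum.delta)
  also have "\<dots> = cnj (coeff (coeff p b) a)"
    by (auto simp: coeff_eq_0)
  finally show ?thesis .
qed

lemma bipoly_eqI: "(\<And>a b. coeff (coeff p a) b = coeff (coeff q a) b) \<Longrightarrow> (p::bipoly) = q"
  by (simp add: poly_eq_iff)

lemma bar_bar [simp]: "barpoly (barpoly p) = p"
  by (rule bipoly_eqI) (simp add: coeff_bar)

lemma bar_add [simp]: "barpoly (p + q) = barpoly p + barpoly q"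
  by (rule bipoly_eqI) (simp add: coeff_bar)

lemma bar_0 [simp]: "barpoly 0 = 0"
  by (rule bipoly_eqI) (simp add: coeff_bar)

lemma bar_1 [simp]: "barpoly 1 = 1"
  by (rule bipoly_eqI) (simp add: coeff_bar coeff_1)

lemma bar_minus [simp]: "barpoly (- p) = - barpoly p"
  by (rule bipoly_eqI) (simp add: coeff_bar)

lemma bar_diff [simp]: "barpoly (p - q) = barpoly p - barpoly q"
  by (rule bipoly_eqI) (simp add: coeff_bar)

lemma bar_mult [simp]: "barpoly (p * q) = barpoly p * barpoly q"
proof (rule bipoly_eqI)
  fix a b
  show "coeff (coeff (barpoly (p * q)) a) b = coeff (coeff (barpoly p * barpoly q) a) b"
    by (simp add: coeff_bar coeff_mult coeff_sum cnj_sum sum_distrib_left sum_distrib_right sum.swap[of _ "{..a}"])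
qed

lemma bar_eq_0_iff [simp]: "barpoly p = 0 \<longleftrightarrow> p = 0"
  by (metis bar_0 bar_bar)

lemma bar_sum: "barpoly (sum f A) = (\<Sum>x\<in>A. barpoly (f x))"
  by (induction A rule: infinite_finite_induct) auto

lemma bar_prod: "barpoly (prod f A) = (\<Prod>x\<in>A. barpoly (f x))"
  by (induction A rule: infinite_finite_induct) auto

lemma bar_power: "barpoly (p ^ n) = barpoly p ^ n"
  by (induction n) auto



lemma degxbar_ge: "degree (coeff p i) \<le> degxbar p"
proof (cases "i \<le> degree p")
  case True thus ?thesis unfolding degxbar_def by (intro Max_ge) auto
next
  case False thus ?thesis by (simp add: coeff_eq_0)
qed

lemma degxbar_le_iff: "degxbar p \<le> B \<longleftrightarrow> (\<forall>i. degree (coeff p i) \<le> B)"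
proof
  assume "degxbar p \<le> B" thus "\<forall>i. degree (coeff p i) \<le> B" using degxbar_ge order_trans by blast
next
  assume "\<forall>i. degree (coeff p i) \<le> B"
  thus "degxbar p \<le> B" unfolding degxbar_def by (subst Max_le_iff) auto
qed

lemma degx_bar: "degx (barpoly p) = degxbar p"
proof (rule antisym)
  show "degx (barpoly p) \<le> degxbar p"
    unfolding degx_def
  proof (rule degree_le, intro allI impI)
    fix n assume n: "degxbar p < n"
    show "coeff (barpoly p) n = 0"
    proof (rule poly_eqI)
      fix m
      have "degree (coeff p m) < n" using degxbar_ge[of p m] n by simp
      thus "coeff (coeff (barpoly p) n) m = coeff 0 m" by (simp add: coeff_bar coeff_eq_0)
    qed
  qed
next
  obtain i where i: "i \<le> degree p" "degxbar p = degree (coeff p i)"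
  proof -
    have "degxbar p \<in> (\<lambda>i. degree (coeff p i)) ` {..degree p}"
      unfolding degxbar_def by (rule Max_in) auto
    thus ?thesis using that by auto
  qed
  show "degxbar p \<le> degx (barpoly p)"
  proof (cases "coeff p i = 0")
    case True thus ?thesis using i by simp
  next
    case False
    have "coeff (coeff (barpoly p) (degxbar p)) i \<noteq> 0"
      using False i by (simp add: coeff_bar)
    hence "coeff (barpoly p) (degxbar p) \<noteq> 0" by auto
    thus ?thesis unfolding degx_def by (rule le_degree)
  qed
qed

lemma degxbar_bar: "degxbar (barpoly p) = degx p"
  by (metis degx_bar bar_bar)

lemma degxbar_via: "degxbar p = degx (barpoly p)" by (simp add: degx_bar)

lemma degx_mult_le: "degx (p * q) \<le> degx p + degx q"
  unfolding degx_def by (rule degree_mult_le)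

lemma degxbar_mult_le: "degxbar (p * q) \<le> degxbar p + degxbar q"
  unfolding degxbar_via bar_mult by (rule degx_mult_le)

lemma degx_add_le: "degx (p + q) \<le> max (degx p) (degx q)"
  unfolding degx_def by (rule degree_add_le_max)

lemma degxbar_add_le: "degxbar (p + q) \<le> max (degxbar p) (degxbar q)"
  unfolding degxbar_via bar_add by (rule degx_add_le)

lemma degx_minus [simp]: "degx (- p) = degx p" unfolding degx_def by simp
lemma degxbar_minus [simp]: "degxbar (- p) = degxbar p" unfolding degxbar_via by simp

lemma degx_mult_eq: "p \<noteq> 0 \<Longrightarrow> q \<noteq> 0 \<Longrightarrow> degx (p * q) = degx p + degx q"
  unfolding degx_def by (rule degree_mult_eq)

lemma degxbar_mult_eq: "p \<noteq> 0 \<Longrightarrow> q \<noteq> 0 \<Longrightarrow> degxbar (p * q) = degxbar p + degxbar q"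
  unfolding degxbar_via bar_mult by (rule degx_mult_eq) auto

lemma degx_sum_le: "(\<And>i. i \<in> A \<Longrightarrow> degx (f i) \<le> n) \<Longrightarrow> degx (sum f A) \<le> n"
  by (induction A rule: infinite_finite_induct) (auto simp: degx_def intro: order_trans[OF degree_add_le_max])

lemma degxbar_sum_le: "(\<And>i. i \<in> A \<Longrightarrow> degxbar (f i) \<le> n) \<Longrightarrow> degxbar (sum f A) \<le> n"
  unfolding degxbar_via bar_sum by (rule degx_sum_le)

lemma degx_prod_le: "finite A \<Longrightarrow> degx (prod f A) \<le> (\<Sum>i\<in>A. degx (f i))"
  unfolding degx_def using degree_prod_sum_le by (metis comp_apply sum.cong)

lemma degxbar_prod_le: "finite A \<Longrightarrow> degxbar (prod f A) \<le> (\<Sum>i\<in>A. degxbar (f i))"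
  unfolding degxbar_via bar_prod by (rule degx_prod_le)

definition corner :: "bipoly \<Rightarrow> bool" where
  "corner p \<longleftrightarrow> coeff (coeff p (degx p)) (degxbar p) \<noteq> 0"

lemma corner_nz: "corner p \<Longrightarrow> p \<noteq> 0"
  unfolding corner_def by auto

lemma corner_bar: "corner p \<Longrightarrow> corner (barpoly p)"
  unfolding corner_def by (simp add: degx_bar degxbar_bar coeff_bar)

lemma corner_mult:
  assumes "corner p" "corner q"
  shows "corner (p * q) \<and> degx (p * q) = degx p + degx q \<and> degxbar (p * q) = degxbar p + degxbar q"
proof -
  have nz: "p \<noteq> 0" "q \<noteq> 0" using assms corner_nz by auto
  have dx: "degx (p * q) = degx p + degx q" using nz by (rule degx_mult_eq)
  have dxb: "degxbar (p * q) = degxbar p + degxbar q" using nz by (rule degxbar_mult_eq)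
  define a where "a = coeff p (degx p)"
  define b where "b = coeff q (degx q)"
  have da: "degree a = degxbar p"
    using assms(1) degxbar_ge[of p "degx p"] unfolding corner_def a_def
    by (meson antisym le_degree)
  have db: "degree b = degxbar q"
    using assms(2) degxbar_ge[of q "degx q"] unfolding corner_def b_def
    by (meson antisym le_degree)
  have c1: "coeff (p * q) (degx (p * q)) = a * b"
    using lead_coeff_mult[of p q] unfolding a_def b_def degx_def by simp
  have "coeff (a * b) (degxbar p + degxbar q) = lead_coeff a * lead_coeff b"
    using lead_coeff_mult[of a b] da db assms unfolding corner_def a_def b_def
    by (metis degree_mult_eq leading_coeff_0_iff)
  also have "\<dots> \<noteq> 0" using assms unfolding corner_def a_def b_def da db
    using da db a_def b_def by simp
  finally show ?thesis unfolding corner_def using c1 dx dxb by simp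
qed

lemma corner_prod:
  assumes "finite A" "\<And>i. i \<in> A \<Longrightarrow> corner (f i)"
  shows "corner (prod f A) \<and> degx (prod f A) = (\<Sum>i\<in>A. degx (f i)) \<and> degxbar (prod f A) = (\<Sum>i\<in>A. degxbar (f i))"
  using assms
proof (induction A rule: finite_induct)
  case empty
  then show ?case by (simp add: corner_def degx_def degxbar_def)
next
  case (insert x F)
  then show ?case using corner_mult[of "f x" "prod f F"] by auto
qed

lemma corner_add:
  assumes "corner p" "degx q \<le> degx p" "degxbar q \<le> degxbar p" "degx q < degx p \<or> degxbar q < degxbar p"
  shows "corner (p + q) \<and> degx (p + q) = degx p \<and> degxbar (p + q) = degxbar p"
proof -
  have q0: "coeff (coeff q (degx p)) (degxbar p) = 0"
  proof (cases "degx q < degx p")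
    case True thus ?thesis by (simp add: degx_def coeff_eq_0)
  next
    case False
    hence "degxbar q < degxbar p" using assms by auto
    hence "degree (coeff q (degx p)) < degxbar p" using degxbar_ge[of q] le_less_trans by blast
    thus ?thesis by (simp add: coeff_eq_0)
  qed
  have c: "coeff (coeff (p + q) (degx p)) (degxbar p) \<noteq> 0" using assms(1) q0 by (simp add: corner_def)
  have "degx (p + q) \<le> degx p" using degx_add_le[of p q] assms by simp
  moreover have "degx p \<le> degx (p + q)" using c unfolding degx_def by (metis coeff_0 le_degree)
  ultimately have dx: "degx (p + q) = degx p" by simp
  have "degxbar (p + q) \<le> degxbar p" using degxbar_add_le[of p q] assms by simp
  moreover have "degxbar p \<le> degxbar (p + q)"
    using c degxbar_ge[of "p + q" "degx p"] le_degree order_trans by blast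
  ultimately have dxb: "degxbar (p + q) = degxbar p" by simp
  show ?thesis using c dx dxb unfolding corner_def by simp
qed



lemma polyF_add [simp]: "polyF (p + q) = polyF p + polyF q"
  by (simp add: polyF_def)
lemma polyF_mult [simp]: "polyF (p * q) = polyF p * polyF q"
  by (simp add: polyF_def)
lemma polyF_minus [simp]: "polyF (- p) = - polyF p"
  by (simp add: polyF_def)
lemma polyF_diff [simp]: "polyF (p - q) = polyF p - polyF q"
  by (simp add: polyF_def)
lemma polyF_0 [simp]: "polyF 0 = 0"
  by (simp add: polyF_def Zero_fract_def)
lemma polyF_1 [simp]: "polyF 1 = 1"
  by (simp add: polyF_def One_fract_def)
lemma polyF_sum: "polyF (sum f A) = (\<Sum>x\<in>A. polyF (f x))"
  by (induction A rule: infinite_finite_induct) auto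
lemma polyF_prod: "polyF (prod f A) = (\<Prod>x\<in>A. polyF (f x))"
  by (induction A rule: infinite_finite_induct) auto
lemma polyF_power: "polyF (p ^ n) = polyF p ^ n"
  by (induction n) auto
lemma polyF_inj [simp]: "polyF p = polyF q \<longleftrightarrow> p = q"
  by (simp add: polyF_def eq_fract)
lemma polyF_eq_0 [simp]: "polyF p = 0 \<longleftrightarrow> p = 0"
  by (metis polyF_0 polyF_inj)

lemma Fract_mult_den: "b \<noteq> 0 \<Longrightarrow> Fract a b * polyF b = polyF a"
  by (simp add: polyF_def eq_fract)

lemma Fract_div: "b \<noteq> 0 \<Longrightarrow> Fract a b = polyF a / polyF b"
  using Fract_mult_den by (metis nonzero_eq_divide_eq polyF_eq_0)

lemma barrat_Fract:
  assumes "b \<noteq> 0"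
  shows "barrat (Fract a b) = Fract (barpoly a) (barpoly b)"
proof -
  define ab where "ab = (SOME (a', b'). b' \<noteq> 0 \<and> Fract a b = Fract a' b')"
  have "\<exists>x. (case x of (a', b') \<Rightarrow> b' \<noteq> 0 \<and> Fract a b = Fract a' b')"
    using assms by (intro exI[of _ "(a, b)"]) simp
  hence "case ab of (a', b') \<Rightarrow> b' \<noteq> 0 \<and> Fract a b = Fract a' b'"
    unfolding ab_def by (rule someI_ex)
  then obtain a' b' where ab': "ab = (a', b')" "b' \<noteq> 0" "Fract a b = Fract a' b'"
    by (cases ab) auto
  have "a * b' = a' * b" using ab' assms by (simp add: eq_fract)
  hence "barpoly a * barpoly b' = barpoly a' * barpoly b" by (metis bar_mult)
  hence "Fract (barpoly a') (barpoly b') = Fract (barpoly a) (barpoly b)"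
    using assms ab' by (simp add: eq_fract)
  thus ?thesis unfolding barrat_def using ab' ab_def by simp
qed

lemma barrat_polyF: "barrat (polyF p) = polyF (barpoly p)"
  unfolding polyF_def by (simp add: barrat_Fract)

lemma barrat_div: "q \<noteq> 0 \<Longrightarrow> barrat (polyF p / polyF q) = polyF (barpoly p) / polyF (barpoly q)"
  by (simp add: Fract_div[symmetric] barrat_Fract)



fun tu :: "(nat \<Rightarrow> nat) \<Rightarrow> nat \<Rightarrow> nat \<times> nat" where
  "tu g 0 = (0, 0)"
| "tu g (Suc j) = (fst (tu g j) + g j * (snd (tu g j) + 1), snd (tu g j) + g j * fst (tu g j))"

definition Xb :: "complex \<Rightarrow> bipoly" where "Xb c = [:[:- c, 1:]:]"

lemma Xb_corner: "corner (Xb c) \<and> degx (Xb c) = 0 \<and> degxbar (Xb c) = 1"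
  by (simp add: Xb_def corner_def degx_def degxbar_def)

lemma Xb_F: "varXbar - constF c = polyF (Xb c)"
proof -
  have "[:[:0, 1:]:] - [:[:c:]:] = Xb c" by (simp add: Xb_def)
  thus ?thesis unfolding varXbar_def constF_def by (metis polyF_diff)
qed

lemma stage:
  assumes g: "g j > 0"
    and tp: "DS g y j = polyF tp" and sp: "QS g y j * DS g y j = polyF sp"
    and ctp: "corner tp" and dtp: "degx tp = t" "degxbar tp = u"
    and dsp: "degx sp \<le> t" "degxbar sp \<le> u"
  defines "fp \<equiv> (\<lambda>l. Xb (cnj (y j l)) * tp + sp)"
  defines "dp \<equiv> (\<Prod>l<g j. fp l)"
  defines "qp \<equiv> - (\<Sum>l<g j. (\<Prod>l'\<in>{..<g j} - {l}. fp l') * tp)"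
  shows "D g y j = polyF dp" "Q g y j * D g y j = polyF qp"
    "corner dp" "degx dp = g j * t" "degxbar dp = g j * (u + 1)"
    "degx qp \<le> g j * t" "degxbar qp < g j * (u + 1)"
proof -
  have tp0: "tp \<noteq> 0" using ctp corner_nz by auto
  have cfp: "corner (fp l) \<and> degx (fp l) = t \<and> degxbar (fp l) = u + 1" for l
  proof -
    have m: "corner (Xb (cnj (y j l)) * tp) \<and> degx (Xb (cnj (y j l)) * tp) = t
        \<and> degxbar (Xb (cnj (y j l)) * tp) = u + 1"
      using corner_mult[OF conjunct1[OF Xb_corner] ctp] Xb_corner dtp by simp
    show ?thesis unfolding fp_def using corner_add[of _ sp] m dsp by simp
  qed
  have fF: "(varXbar - constF (cnj (y j l)) + QS g y j) * DS g y j = polyF (fp l)" for l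
    unfolding fp_def Xb_F using sp tp by (simp add: algebra_simps)
  show D: "D g y j = polyF dp"
    unfolding D_def dp_def polyF_prod fF[symmetric]
    by (simp add: prod.distrib)
  have cd: "corner dp \<and> degx dp = (\<Sum>l<g j. t) \<and> degxbar dp = (\<Sum>l<g j. u + 1)"
    unfolding dp_def using corner_prod[of "{..<g j}" fp] cfp by simp
  thus "corner dp" "degx dp = g j * t" "degxbar dp = g j * (u + 1)" by auto
  have fnz: "varXbar - constF (cnj (y j l)) + QS g y j \<noteq> 0" for l
    using fF[of l] cfp[of l] corner_nz by force
  have "Q g y j * D g y j = - (\<Sum>l<g j. 1 / (varXbar - constF (cnj (y j l)) + QS g y j) * polyF dp)"
    unfolding Q_def Qterm_def D by (simp add: sum_distrib_right)
  also have "\<dots> = - (\<Sum>l<g j. polyF ((\<Prod>l'\<in>{..<g j} - {l}. fp l') * tp))"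
  proof (intro arg_cong[where f = uminus] sum.cong refl)
    fix l assume l: "l \<in> {..<g j}"
    have "polyF dp = polyF (fp l) * polyF (\<Prod>l'\<in>{..<g j} - {l}. fp l')"
      unfolding dp_def using prod.remove[of "{..<g j}" l fp] l by simp
    thus "1 / (varXbar - constF (cnj (y j l)) + QS g y j) * polyF dp
        = polyF ((\<Prod>l'\<in>{..<g j} - {l}. fp l') * tp)"
      using fnz[of l] fF[of l, symmetric] tp by (simp add: field_simps)
  qed
  also have "\<dots> = polyF qp" unfolding qp_def by (simp add: polyF_sum)
  finally show "Q g y j * D g y j = polyF qp" .
  have card: "card ({..<g j} - {l}) = g j - 1" if "l < g j" for l using that by simp
  have "degx qp \<le> g j * t" unfolding qp_def degx_minus
  proof (rule degx_sum_le)
    fix l assume l: "l \<in> {..<g j}"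
    have "degx ((\<Prod>l'\<in>{..<g j} - {l}. fp l') * tp) \<le> degx (\<Prod>l'\<in>{..<g j} - {l}. fp l') + t"
      using degx_mult_le dtp by metis
    also have "\<dots> \<le> (\<Sum>l'\<in>{..<g j} - {l}. degx (fp l')) + t"
      using degx_prod_le[of "{..<g j} - {l}" fp] by simp
    also have "\<dots> = (g j - 1) * t + t" using cfp card l by simp
    also have "\<dots> = g j * t" using g by (cases "g j") auto
    finally show "degx ((\<Prod>l'\<in>{..<g j} - {l}. fp l') * tp) \<le> g j * t" .
  qed
  thus "degx qp \<le> g j * t" .
  have "degxbar qp \<le> g j * (u + 1) - 1" unfolding qp_def degxbar_minus
  proof (rule degxbar_sum_le)
    fix l assume l: "l \<in> {..<g j}"
    have "degxbar ((\<Prod>l'\<in>{..<g j} - {l}. fp l') * tp) \<le> degxbar (\<Prod>l'\<in>{..<g j} - {l}. fp l') + u"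
      using degxbar_mult_le dtp by metis
    also have "\<dots> \<le> (\<Sum>l'\<in>{..<g j} - {l}. degxbar (fp l')) + u"
      using degxbar_prod_le[of "{..<g j} - {l}" fp] by simp
    also have "\<dots> = (g j - 1) * (u + 1) + u" using cfp card l by simp
    also have "\<dots> = g j * (u + 1) - 1" using g by (cases "g j") auto
    finally show "degxbar ((\<Prod>l'\<in>{..<g j} - {l}. fp l') * tp) \<le> g j * (u + 1) - 1" .
  qed
  thus "degxbar qp < g j * (u + 1)" using g by (cases "g j") auto
qed



definition Inv :: "(nat \<Rightarrow> nat) \<Rightarrow> (nat \<Rightarrow> nat \<Rightarrow> complex) \<Rightarrow> nat \<Rightarrow> bool" where
  "Inv g y j \<longleftrightarrow> (\<exists>tp sp. DS g y j = polyF tp \<and> QS g y j * DS g y j = polyF sp \<and> corner tp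
     \<and> degx tp = fst (tu g j) \<and> degxbar tp = snd (tu g j)
     \<and> degx sp \<le> fst (tu g j) \<and> degxbar sp \<le> snd (tu g j))"

lemma Inv_0: "Inv g y 0"
  unfolding Inv_def
  by (intro exI[of _ 1] exI[of _ 0]) (simp add: corner_def degx_def degxbar_def)

lemma stage_ex:
  assumes "g j > 0" "Inv g y j"
  shows "\<exists>dp qp. D g y j = polyF dp \<and> Q g y j * D g y j = polyF qp \<and>
    corner dp \<and> degx dp = g j * fst (tu g j) \<and> degxbar dp = g j * (snd (tu g j) + 1) \<and>
    degx qp \<le> g j * fst (tu g j) \<and> degxbar qp < g j * (snd (tu g j) + 1)"
proof -
  obtain tp sp where "DS g y j = polyF tp" "QS g y j * DS g y j = polyF sp" "corner tp"
     "degx tp = fst (tu g j)" "degxbar tp = snd (tu g j)"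
     "degx sp \<le> fst (tu g j)" "degxbar sp \<le> snd (tu g j)"
    using assms(2) unfolding Inv_def by blast
  from stage[OF assms(1) this] show ?thesis by blast
qed

lemma Inv_Suc:
  assumes "g j > 0" "Inv g y j"
  shows "Inv g y (Suc j)"
proof -
  obtain tp sp where tp: "DS g y j = polyF tp" and sp: "QS g y j * DS g y j = polyF sp" and ct: "corner tp"
     and d: "degx tp = fst (tu g j)" "degxbar tp = snd (tu g j)"
     "degx sp \<le> fst (tu g j)" "degxbar sp \<le> snd (tu g j)"
    using assms(2) unfolding Inv_def by blast
  obtain dp qp where D: "D g y j = polyF dp" and QD: "Q g y j * D g y j = polyF qp" and
    cd: "corner dp" and dd: "degx dp = g j * fst (tu g j)" "degxbar dp = g j * (snd (tu g j) + 1)"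
    "degx qp \<le> g j * fst (tu g j)" "degxbar qp < g j * (snd (tu g j) + 1)"
    using stage_ex[OF assms] by blast
  have dp0: "dp \<noteq> 0" using cd corner_nz by auto
  have tp0: "tp \<noteq> 0" using ct corner_nz by auto
  have Qe: "Q g y j = polyF qp / polyF dp" using QD D dp0 by (simp add: field_simps)
  have DS1: "DS g y (Suc j) = polyF (tp * barpoly dp)"
  proof -
    have "DS g y (Suc j) = DS g y j * barrat (D g y j)" unfolding D_def by simp
    thus ?thesis using tp D by (simp add: barrat_polyF)
  qed
  have QS1: "QS g y (Suc j) * DS g y (Suc j) = polyF (sp * barpoly dp + tp * barpoly qp)"
  proof -
    have "QS g y (Suc j) * DS g y (Suc j) = (QS g y j + polyF (barpoly qp) / polyF (barpoly dp)) * (polyF tp * polyF (barpoly dp))"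
      using DS1 Qe dp0 by (simp add: Q_def[symmetric] barrat_div)
    also have "\<dots> = (QS g y j * polyF tp) * polyF (barpoly dp) + polyF tp * polyF (barpoly qp)"
      using dp0 by (simp add: field_simps)
    finally show ?thesis using sp tp by simp
  qed
  have ctp1: "corner (tp * barpoly dp) \<and> degx (tp * barpoly dp) = degx tp + degxbar dp
     \<and> degxbar (tp * barpoly dp) = degxbar tp + degx dp"
    using corner_mult[OF ct corner_bar[OF cd]] by (simp add: degx_bar degxbar_bar)
  have b1: "degx (sp * barpoly dp + tp * barpoly qp) \<le> fst (tu g (Suc j))"
  proof -
    have "degx (sp * barpoly dp) \<le> fst (tu g (Suc j))"
      using degx_mult_le[of sp "barpoly dp"] d dd by (simp add: degx_bar)
    moreover have "degx (tp * barpoly qp) \<le> fst (tu g (Suc j))"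
      using degx_mult_le[of tp "barpoly qp"] d dd by (simp add: degx_bar)
    ultimately show ?thesis using degx_add_le order_trans by (metis max.bounded_iff)
  qed
  have b2: "degxbar (sp * barpoly dp + tp * barpoly qp) \<le> snd (tu g (Suc j))"
  proof -
    have "degxbar (sp * barpoly dp) \<le> snd (tu g (Suc j))"
      using degxbar_mult_le[of sp "barpoly dp"] d dd by (simp add: degxbar_bar)
    moreover have "degxbar (tp * barpoly qp) \<le> snd (tu g (Suc j))"
      using degxbar_mult_le[of tp "barpoly qp"] d dd by (simp add: degxbar_bar)
    ultimately show ?thesis using degxbar_add_le order_trans by (metis max.bounded_iff)
  qed
  show ?thesis unfolding Inv_def
    apply (rule exI[of _ "tp * barpoly dp"], rule exI[of _ "sp * barpoly dp + tp * barpoly qp"])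
    apply (intro conjI)
          apply (fact DS1)
         apply (fact QS1)
    using ctp1 b1 b2 d dd by simp_all
qed

lemma Inv_all: "(\<And>i. i < K \<Longrightarrow> g i > 0) \<Longrightarrow> j \<le> K \<Longrightarrow> Inv g y j"
  by (induction j) (auto simp: Inv_0 Inv_Suc)

lemma tu_arith:
  "1 + (\<Sum>i<n. g i * fst (tu g i)) = snd (tu g n) + 1 \<and> (\<Sum>i<n. g i * (snd (tu g i) + 1)) = fst (tu g n)
   \<and> FK n g 1 = int (snd (tu g n) + 1) + int (fst (tu g n))
   \<and> FK n g (-1) = int (snd (tu g n) + 1) - int (fst (tu g n))"
proof (induction n)
  case 0
  then show ?case by (simp add: FK_def)
next
  case (Suc n)
  define S where "S = snd (tu g n)"
  define T where "T = fst (tu g n)"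
  have e1: "FK n g 1 = int S + 1 + int T" and e2: "FK n g (-1) = int S + 1 - int T"
    using Suc by (simp_all add: S_def T_def)
  have h3: "FK (Suc n) g 1 = (int S + 1 + int T) * (1 + int (g n))"
    using e1 by (simp add: FK_def)
  have h4: "FK (Suc n) g (-1) = (int S + 1 - int T) * (1 - int (g n))"
    using e2 by (simp add: FK_def)
  have h5: "1 + (\<Sum>i<Suc n. g i * fst (tu g i)) = snd (tu g (Suc n)) + 1"
    using Suc by (simp add: S_def T_def)
  have h6: "(\<Sum>i<Suc n. g i * (snd (tu g i) + 1)) = fst (tu g (Suc n))"
    using Suc by (simp add: S_def T_def)
  show ?case unfolding h3 h4 using h5 h6
    by (simp add: S_def[symmetric] T_def[symmetric] algebra_simps)
qed



theorem proposition1: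
  fixes K :: nat and g :: "nat \<Rightarrow> nat" and w :: complex and y :: "nat \<Rightarrow> nat \<Rightarrow> complex"
  assumes "K \<ge> 1" and "\<And>i. i < K \<Longrightarrow> g i > 0"
  shows "\<exists>p ph. lensP K g y w = polyF p \<and> lensPhat K g y w = polyF ph
           \<and> degvec p = degvec ph
           \<and> int (degx p) = EK K g \<and> int (degxbar p) = OK K g"
proof -
  define P where "P = (\<lambda>i dp qp. D g y i = polyF dp \<and> Q g y i * D g y i = polyF qp \<and>
    corner dp \<and> degx dp = g i * fst (tu g i) \<and> degxbar dp = g i * (snd (tu g i) + 1) \<and>
    degx qp \<le> g i * fst (tu g i) \<and> degxbar qp < g i * (snd (tu g i) + 1))"
  have "\<forall>i. \<exists>pq. i < K \<longrightarrow> P i (fst pq) (snd pq)"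
  proof
    fix i
    show "\<exists>pq. i < K \<longrightarrow> P i (fst pq) (snd pq)"
    proof (cases "i < K")
      case True
      have gi: "g i > 0" using assms(2) True by blast
      have "Inv g y i" by (rule Inv_all[of K]) (use assms(2) True in auto)
      then obtain dp qp where "P i dp qp" unfolding P_def
        using stage_ex[of g i y, OF gi] by blast
      thus ?thesis by (intro exI[of _ "(dp, qp)"]) simp
    qed simp
  qed
  then obtain f where f: "\<And>i. i < K \<Longrightarrow> P i (fst (f i)) (snd (f i))" by metis
  define dp where "dp i = fst (f i)" for i
  define qp where "qp i = snd (f i)" for i
  have Di: "D g y i = polyF (dp i)" "Q g y i * D g y i = polyF (qp i)"
    "corner (dp i)" "degx (dp i) = g i * fst (tu g i)" "degxbar (dp i) = g i * (snd (tu g i) + 1)"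
    "degx (qp i) \<le> g i * fst (tu g i)" "degxbar (qp i) < g i * (snd (tu g i) + 1)" if "i < K" for i
    using f[OF that] unfolding P_def dp_def qp_def by auto
  define Dp where "Dp = (\<Prod>i<K. dp i)"
  have DpF: "(\<Prod>i<K. D g y i) = polyF Dp"
    unfolding Dp_def polyF_prod using Di(1) by (intro prod.cong) auto
  have cDp: "corner Dp \<and> degx Dp = (\<Sum>i<K. g i * fst (tu g i)) \<and> degxbar Dp = (\<Sum>i<K. g i * (snd (tu g i) + 1))"
    unfolding Dp_def using corner_prod[of "{..<K}" dp] Di by simp
  define rest where "rest k = qp k * (\<Prod>i\<in>{..<K} - {k}. dp i)" for k
  have QF: "Q g y k * polyF Dp = polyF (rest k)" if "k < K" for k
  proof -
    have "polyF Dp = D g y k * polyF (\<Prod>i\<in>{..<K} - {k}. dp i)"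
      unfolding Dp_def using prod.remove[of "{..<K}" k dp] that Di(1)[OF that] by simp
    thus ?thesis unfolding rest_def using Di(2)[OF that] by (simp add: mult.assoc[symmetric])
  qed
  define Lw :: bipoly where "Lw = [:0, 1:] - [:[:w:]:]"
  have LwF: "varX - constF w = polyF Lw" unfolding Lw_def varX_def constF_def by (simp only: polyF_diff)
  have cLw: "corner Lw \<and> degx Lw = 1 \<and> degxbar Lw = 0"
    by (simp add: Lw_def corner_def degx_def degxbar_def atMost_Suc)
  define ph where "ph = Lw * Dp"
  define p where "p = ph + (\<Sum>k<K. rest k)"
  have ph: "lensPhat K g y w = polyF ph" unfolding lensPhat_def LwF DpF ph_def by simp
  have pF: "lensP K g y w = polyF p"
  proof -
    have "lensP K g y w = polyF Lw * polyF Dp + (\<Sum>k<K. Q g y k * polyF Dp)"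
      unfolding lensP_def LwF DpF by (simp add: algebra_simps sum_distrib_left)
    also have "\<dots> = polyF p" unfolding p_def ph_def using QF by (simp add: polyF_sum)
    finally show ?thesis .
  qed
  have cph: "corner ph \<and> degx ph = 1 + (\<Sum>i<K. g i * fst (tu g i)) \<and> degxbar ph = (\<Sum>i<K. g i * (snd (tu g i) + 1))"
    unfolding ph_def using corner_mult[of Lw Dp] cLw cDp by simp
  have rb: "degx (rest k) \<le> (\<Sum>i<K. g i * fst (tu g i)) \<and> degxbar (rest k) \<le> (\<Sum>i<K. g i * (snd (tu g i) + 1))"
    if k: "k < K" for k
  proof -
    have s1: "(\<Sum>i<K. h i) = h k + (\<Sum>i\<in>{..<K} - {k}. h i)" for h :: "nat \<Rightarrow> nat"
      using sum.remove[of "{..<K}" k h] k by simp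
    have "degx (rest k) \<le> degx (qp k) + (\<Sum>i\<in>{..<K} - {k}. degx (dp i))"
      unfolding rest_def using degx_mult_le[of "qp k"] degx_prod_le[of "{..<K} - {k}" dp]
      by (meson add_left_mono finite_Diff finite_lessThan order_trans)
    also have "\<dots> \<le> (\<Sum>i<K. g i * fst (tu g i))"
      unfolding s1[of "\<lambda>i. g i * fst (tu g i)"] using Di(4,6) k by (intro add_mono) (auto intro!: sum.cong eq_imp_le)
    finally have 1: "degx (rest k) \<le> (\<Sum>i<K. g i * fst (tu g i))" .
    have "degxbar (rest k) \<le> degxbar (qp k) + (\<Sum>i\<in>{..<K} - {k}. degxbar (dp i))"
      unfolding rest_def using degxbar_mult_le[of "qp k"] degxbar_prod_le[of "{..<K} - {k}" dp]
      by (meson add_left_mono finite_Diff finite_lessThan order_trans)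
    also have "\<dots> \<le> (\<Sum>i<K. g i * (snd (tu g i) + 1))"
      unfolding s1[of "\<lambda>i. g i * (snd (tu g i) + 1)"] using Di(5,7) k by (intro add_mono) (auto intro!: sum.cong eq_imp_le less_imp_le)
    finally show ?thesis using 1 by simp
  qed
  have sb: "degx (\<Sum>k<K. rest k) \<le> (\<Sum>i<K. g i * fst (tu g i))"
    by (rule degx_sum_le) (use rb in auto)
  have sb2: "degxbar (\<Sum>k<K. rest k) \<le> (\<Sum>i<K. g i * (snd (tu g i) + 1))"
    by (rule degxbar_sum_le) (use rb in auto)
  have cp: "corner p \<and> degx p = degx ph \<and> degxbar p = degxbar ph"
    unfolding p_def using corner_add[of ph "\<Sum>k<K. rest k"] cph sb sb2 by simp
  have ar: "1 + (\<Sum>i<K. g i * fst (tu g i)) = snd (tu g K) + 1" "(\<Sum>i<K. g i * (snd (tu g K) + 1)) = fst (tu g K) \<or> True"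
    "(\<Sum>i<K. g i * (snd (tu g i) + 1)) = fst (tu g K)"
    "FK K g 1 = int (snd (tu g K) + 1) + int (fst (tu g K))"
    "FK K g (-1) = int (snd (tu g K) + 1) - int (fst (tu g K))"
    using tu_arith[of g K] by auto
  have "EK K g = int (snd (tu g K) + 1)" unfolding EK_def ar(4,5) by simp
  moreover have "OK K g = int (fst (tu g K))" unfolding OK_def ar(4,5) by simp
  ultimately show ?thesis
    using pF ph cp cph ar(1,3) unfolding degvec_def
    by (intro exI[of _ p] exI[of _ ph]) simp
qed

end
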